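(* Let $L\in\mathbb N$ and $0\le p<1$. On $\Omega=\{0,1\}^L$, with $\omega=(\omega(0),\dots,\omega(L-1))$ and $|\omega|=\sum_j\omega(j)$, let $Q$ be the transition function $$Q\big(\eta,(\eta(1),\dots,\eta(L-1),s)\big)=\begin{cases}\frac1L\big(|\eta|p+(L-|\eta|)(1-p)\big),& s=1,\\ \frac1L\big((L-|\eta|)p+|\eta|(1-p)\big),& s=0,\end{cases}$$ and $Q(\eta,\omega)=0$ for all other $\omega$. Let $c_j=(1-p)\big(1-\frac jL\big)+\frac jLp$ for $0\le j\le L$. Then $$\pi(\omega)=Z^{-1}\prod_{j=0}^{|\omega|-1}\frac{c_j}{c_{L-j-1}},$$ with $Z$ the normalizing constant (empty product $=1$), is a stationary distribution of $Q$, i.e. $\pi Q=\pi$. *)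

theory Defs
  imports Complex_Main
begin

text \<open>State space: binary words of length L, encoded as bool lists
  (True = 1, False = 0); position j of the list is omega(j).\<close>
definition Omega :: "nat \<Rightarrow> bool list set" where
  "Omega L = {w. length w = L}"

definition wt :: "bool list \<Rightarrow> nat" where
  "wt w = length (filter id w)"

definition Qtrans :: "nat \<Rightarrow> real \<Rightarrow> bool list \<Rightarrow> bool list \<Rightarrow> real" where
  "Qtrans L p eta w =
     (if (\<exists>s. w = tl eta @ [s]) then
        (if last w
         then (real (wt eta) * p + (real L - real (wt eta)) * (1 - p)) / real L
         else ((real L - real (wt eta)) * p + real (wt eta) * (1 - p)) / real L)
      else 0)"

definition cc :: "nat \<Rightarrow> real \<Rightarrow> nat \<Rightarrow> real" where
  "cc L p j = (1 - p) * (1 - real j / real L) + real j / real L * p"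

definition weight :: "nat \<Rightarrow> real \<Rightarrow> bool list \<Rightarrow> real" where
  "weight L p w = (\<Prod>j<wt w. cc L p j / cc L p (L - j - 1))"

definition Zconst :: "nat \<Rightarrow> real \<Rightarrow> real" where
  "Zconst L p = (\<Sum>w\<in>Omega L. weight L p w)"

definition piD :: "nat \<Rightarrow> real \<Rightarrow> bool list \<Rightarrow> real" where
  "piD L p w = weight L p w / Zconst L p"

end

theory Submission
  imports Defs
begin

lemma cc_pos:
  assumes "0 \<le> p" "p < 1" "j < L"
  shows "cc L p j > 0"
proof -
  have "real j / real L < 1" using assms by simp
  hence "(1 - p) * (1 - real j / real L) > 0" using assms by simp
  moreover have "real j / real L * p \<ge> 0" using assms by simp
  ultimately show ?thesis unfolding cc_def by linarith
qed

lemma cc_compl: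
  assumes "k \<le> L" "L \<ge> 1"
  shows "cc L p k + cc L p (L - k) = 1"
  using assms unfolding cc_def by (simp add: of_nat_diff field_simps)

lemma wt_le: "wt u \<le> length u"
  unfolding wt_def by (rule length_filter_le)

lemma wt_Cons: "wt (b # u) = (if b then Suc (wt u) else wt u)"
  unfolding wt_def by simp

lemma wt_snoc: "wt (u @ [b]) = (if b then Suc (wt u) else wt u)"
  unfolding wt_def by simp

lemma finite_Omega: "finite (Omega L)"
proof -
  have "Omega L = {xs. set xs \<subseteq> (UNIV::bool set) \<and> length xs = L}"
    unfolding Omega_def by auto
  thus ?thesis using finite_lists_length_eq[of "UNIV::bool set" L] by simp
qed

lemma weight_pos:
  assumes "0 \<le> p" "p < 1" "w \<in> Omega L"
  shows "weight L p w > 0"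
proof -
  have "wt w \<le> L" using wt_le[of w] assms(3) by (simp add: Omega_def)
  hence "\<forall>j<wt w. cc L p j / cc L p (L - j - 1) > 0"
    using assms cc_pos by (auto intro!: divide_pos_pos)
  thus ?thesis unfolding weight_def by (auto intro!: prod_pos)
qed

lemma weight_rec:
  assumes "0 \<le> p" "p < 1" "wt u < L"
  shows "weight L p (True # u) * cc L p (L - wt u - 1) = weight L p (False # u) * cc L p (wt u)"
proof -
  have "cc L p (L - wt u - 1) > 0" using assms cc_pos by simp
  thus ?thesis unfolding weight_def wt_Cons by simp
qed

lemma Qtrans_zero:
  assumes "w \<noteq> []" "tl eta \<noteq> butlast w"
  shows "Qtrans L p eta w = 0"
  using assms unfolding Qtrans_def by (metis butlast_snoc)

lemma Qtrans_alt:
  assumes "w \<noteq> []" "length eta = L" "L \<ge> 1"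
  shows "Qtrans L p eta w = (if tl eta = butlast w then
     (if last w then cc L p (wt eta) else cc L p (L - wt eta)) else 0)"
proof -
  have ex: "(\<exists>s. w = tl eta @ [s]) \<longleftrightarrow> tl eta = butlast w"
    using assms by (metis append_butlast_last_id butlast_snoc)
  have "wt eta \<le> L" using wt_le[of eta] assms by simp
  thus ?thesis unfolding Qtrans_def ex cc_def using assms(3)
    by (auto simp: field_simps of_nat_diff)
qed

lemma stat_weight:
  assumes "L \<ge> 1" "0 \<le> p" "p < 1" "w \<in> Omega L"
  shows "(\<Sum>eta\<in>Omega L. weight L p eta * Qtrans L p eta w) = weight L p w"
proof -
  define u where "u = butlast w"
  have lw: "length w = L" using assms by (simp add: Omega_def)
  hence wne: "w \<noteq> []" using assms by auto
  have wdec: "w = u @ [last w]" unfolding u_def using wne by simp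
  have lu: "length u = L - 1" using lw by (simp add: u_def)
  have mL: "wt u < L" using wt_le[of u] lu assms by simp
  have lT: "length (True # u) = L" and lF: "length (False # u) = L" using lu assms(1) by auto
  let ?g = "\<lambda>eta. weight L p eta * Qtrans L p eta w"
  have sub: "{True # u, False # u} \<subseteq> Omega L" using lu assms by (auto simp: Omega_def)
  have "(\<Sum>eta\<in>Omega L. ?g eta) = (\<Sum>eta\<in>{True # u, False # u}. ?g eta)"
  proof (rule sum.mono_neutral_right[OF finite_Omega sub], rule ballI)
    fix eta assume e: "eta \<in> Omega L - {True # u, False # u}"
    have "tl eta \<noteq> u"
    proof
      assume "tl eta = u"
      moreover have "eta \<noteq> []" using e lu assms by (auto simp: Omega_def)
      ultimately have "eta = hd eta # u" by auto
      thus False using e by (cases "hd eta") auto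
    qed
    thus "?g eta = 0" using Qtrans_zero[OF wne] u_def by simp
  qed
  also have "\<dots> = ?g (True # u) + ?g (False # u)" by simp
  also have "\<dots> = weight L p w"
  proof (cases "last w")
    case True
    have ww: "wt w = Suc (wt u)" using wdec True wt_snoc by metis
    have wT: "weight L p w = weight L p (True # u)" unfolding weight_def ww wt_Cons by simp
    have c: "cc L p (Suc (wt u)) + cc L p (L - Suc (wt u)) = 1"
      using cc_compl[of "Suc (wt u)" L p] mL assms by simp
    have r: "weight L p (True # u) * cc L p (L - wt u - 1) = weight L p (False # u) * cc L p (wt u)"
      using weight_rec[OF assms(2,3) mL] .
    have "?g (True # u) + ?g (False # u) = weight L p (True # u) * cc L p (Suc (wt u))
          + weight L p (False # u) * cc L p (wt u)"
      using True by (simp add: Qtrans_alt[OF wne lT assms(1)] Qtrans_alt[OF wne lF assms(1)] u_def[symmetric] wt_Cons)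
    also have "\<dots> = weight L p (True # u) * (cc L p (Suc (wt u)) + cc L p (L - Suc (wt u)))"
      using r by (simp add: algebra_simps)
    finally show ?thesis using c wT by simp
  next
    case False
    have ww: "wt w = wt u" using wdec False wt_snoc by metis
    have wF: "weight L p w = weight L p (False # u)" unfolding weight_def ww wt_Cons by simp
    have c: "cc L p (wt u) + cc L p (L - wt u) = 1"
      using cc_compl[of "wt u" L p] mL assms by simp
    have r: "weight L p (True # u) * cc L p (L - wt u - 1) = weight L p (False # u) * cc L p (wt u)"
      using weight_rec[OF assms(2,3) mL] .
    have "?g (True # u) + ?g (False # u) = weight L p (True # u) * cc L p (L - wt u - 1)
          + weight L p (False # u) * cc L p (L - wt u)"
      using False by (simp add: Qtrans_alt[OF wne lT assms(1)] Qtrans_alt[OF wne lF assms(1)] u_def[symmetric] wt_Cons)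
    also have "\<dots> = weight L p (False # u) * (cc L p (wt u) + cc L p (L - wt u))"
      using r by (simp add: algebra_simps)
    finally show ?thesis using c wF by simp
  qed
  finally show ?thesis .
qed

theorem mainTheorem14:
  fixes L :: nat and p :: real
  assumes "L \<ge> 1" and "0 \<le> p" and "p < 1"
  shows "(\<forall>w\<in>Omega L. piD L p w \<ge> 0)
       \<and> (\<Sum>w\<in>Omega L. piD L p w) = 1
       \<and> (\<forall>w\<in>Omega L. (\<Sum>eta\<in>Omega L. piD L p eta * Qtrans L p eta w) = piD L p w)"
proof -
  have ne: "replicate L True \<in> Omega L" by (simp add: Omega_def)
  have Zpos: "Zconst L p > 0" unfolding Zconst_def
    by (rule sum_pos[OF finite_Omega]) (use ne weight_pos[OF assms(2,3)] in auto)
  have A: "\<forall>w\<in>Omega L. piD L p w \<ge> 0"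
    using weight_pos[OF assms(2,3)] Zpos unfolding piD_def by (simp add: less_imp_le)
  have B: "(\<Sum>w\<in>Omega L. piD L p w) = 1"
    unfolding piD_def using Zpos by (simp add: sum_divide_distrib[symmetric] Zconst_def)
  have C: "\<forall>w\<in>Omega L. (\<Sum>eta\<in>Omega L. piD L p eta * Qtrans L p eta w) = piD L p w"
  proof
    fix w assume w: "w \<in> Omega L"
    have "(\<Sum>eta\<in>Omega L. piD L p eta * Qtrans L p eta w)
        = (\<Sum>eta\<in>Omega L. weight L p eta * Qtrans L p eta w) / Zconst L p"
      unfolding piD_def sum_divide_distrib by (simp add: field_simps)
    thus "(\<Sum>eta\<in>Omega L. piD L p eta * Qtrans L p eta w) = piD L p w"
      using stat_weight[OF assms w] unfolding piD_def by simp
  qed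
  show ?thesis using A B C by blast
qed

end
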